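(* Let $Y$ be a Banach space, let $1 \le p \le \infty$ or $p = 0$, and let $\mathcal{Z} = \big(\sum Y\big)_p$. Let $T \in \mathcal{L}(\mathcal{Z})$. Then the operators $P_0 T$ and $T P_0$ are commutators in $\mathcal{L}(\mathcal{Z})$, i.e. each is of the form $AB - BA$ with $A, B \in \mathcal{L}(\mathcal{Z})$.
   Context: For a Banach space $Y$ and $1\le p\le\infty$, $\big(\sum Y\big)_p$ is the space of sequences $(y_i)_{i\ge 0}$ with $y_i \in Y$ and $(\|y_i\|)_i \in \ell_p$, normed by $\|(y_i)\| = \|(\|y_i\|)_i\|_{\ell_p}$; for $p=0$ it is the space of sequences with $\|y_i\| \to 0$ and the sup norm (the $c_0$-sum). $P_0$ is the natural norm one projection $P_0(y_0, y_1, \ldots) = (y_0, 0, 0, \ldots)$ onto the $0$-th component. *)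

theory Defs
  imports "HOL-Analysis.Analysis"
begin

text \<open>Index of the direct sum: LP p for 1 <= p < infinity, LInf for p = infinity,
  C0 for the c_0-sum (the paper's p = 0).\<close>
datatype sum_index = LP real | LInf | C0

definition valid_index :: "sum_index \<Rightarrow> bool" where
  "valid_index q \<longleftrightarrow> (case q of LP p \<Rightarrow> 1 \<le> p | LInf \<Rightarrow> True | C0 \<Rightarrow> True)"

definition psum_space :: "sum_index \<Rightarrow> (nat \<Rightarrow> 'a::real_normed_vector) set" where
  "psum_space q = (case q of
      LP p \<Rightarrow> {y. summable (\<lambda>i. norm (y i) powr p)}
    | LInf \<Rightarrow> {y. bdd_above (range (\<lambda>i. norm (y i)))}
    | C0 \<Rightarrow> {y. (\<lambda>i. norm (y i)) \<longlonglongrightarrow> 0})"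

definition psum_norm :: "sum_index \<Rightarrow> (nat \<Rightarrow> 'a::real_normed_vector) \<Rightarrow> real" where
  "psum_norm q y = (case q of
      LP p \<Rightarrow> (\<Sum>i. norm (y i) powr p) powr (1 / p)
    | LInf \<Rightarrow> (SUP i. norm (y i))
    | C0 \<Rightarrow> (SUP i. norm (y i)))"

text \<open>Bounded linear operators on (sum Y)_q (only their values on the space matter).\<close>
definition bounded_op :: "sum_index \<Rightarrow> ((nat \<Rightarrow> 'a::real_normed_vector) \<Rightarrow> (nat \<Rightarrow> 'a)) \<Rightarrow> bool" where
  "bounded_op q T \<longleftrightarrow>
     (\<forall>x\<in>psum_space q. T x \<in> psum_space q) \<and>
     (\<forall>x\<in>psum_space q. \<forall>y\<in>psum_space q. T (\<lambda>i. x i + y i) = (\<lambda>i. T x i + T y i)) \<and>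
     (\<forall>c. \<forall>x\<in>psum_space q. T (\<lambda>i. c *\<^sub>R x i) = (\<lambda>i. c *\<^sub>R T x i)) \<and>
     (\<exists>K. \<forall>x\<in>psum_space q. psum_norm q (T x) \<le> K * psum_norm q x)"

definition P0 :: "(nat \<Rightarrow> 'a::zero) \<Rightarrow> (nat \<Rightarrow> 'a)" where
  "P0 y = (\<lambda>i. if i = 0 then y 0 else 0)"

definition is_commutator :: "sum_index \<Rightarrow> ((nat \<Rightarrow> 'a::real_normed_vector) \<Rightarrow> (nat \<Rightarrow> 'a)) \<Rightarrow> bool" where
  "is_commutator q S \<longleftrightarrow> (\<exists>A B. bounded_op q A \<and> bounded_op q B \<and>
      (\<forall>z\<in>psum_space q. S z = (\<lambda>i. A (B z) i - B (A z) i)))"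

end

theory Submission
  imports Defs
begin

lemma sup_dom:
  fixes z :: "nat \<Rightarrow> 'a::real_normed_vector" and f :: "nat \<Rightarrow> 'b::real_normed_vector"
  assumes b: "bdd_above (range (\<lambda>i. norm (z i)))" and c: "0 \<le> c"
    and le: "\<And>i. norm (f i) \<le> c * norm (z i)"
  shows "bdd_above (range (\<lambda>i. norm (f i))) \<and> (SUP i. norm (f i)) \<le> c * (SUP i. norm (z i))"
proof -
  have u: "norm (z i) \<le> (SUP i. norm (z i))" for i using b by (auto intro: cSUP_upper)
  have "norm (f i) \<le> c * (SUP i. norm (z i))" for i
    using le[of i] mult_left_mono[OF u[of i] c] by linarith
  then show ?thesis by (auto intro!: cSUP_least bdd_aboveI2)
qed

lemma sup_add:
  fixes f g :: "nat \<Rightarrow> 'a::real_normed_vector"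
  assumes bf: "bdd_above (range (\<lambda>i. norm (f i)))" and bg: "bdd_above (range (\<lambda>i. norm (g i)))"
  shows "bdd_above (range (\<lambda>i. norm (f i + g i))) \<and> (SUP i. norm (f i + g i)) \<le> (SUP i. norm (f i)) + (SUP i. norm (g i))"
proof -
  have uf: "norm (f i) \<le> (SUP i. norm (f i))" for i using bf by (auto intro: cSUP_upper)
  have ug: "norm (g i) \<le> (SUP i. norm (g i))" for i using bg by (auto intro: cSUP_upper)
  have "norm (f i + g i) \<le> (SUP i. norm (f i)) + (SUP i. norm (g i))" for i
    using norm_triangle_ineq[of "f i" "g i"] uf[of i] ug[of i] by linarith
  then show ?thesis by (auto intro!: cSUP_least bdd_aboveI2)
qed

lemma sup_nonneg:
  fixes z :: "nat \<Rightarrow> 'a::real_normed_vector"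
  assumes b: "bdd_above (range (\<lambda>i. norm (z i)))"
  shows "0 \<le> (SUP i. norm (z i))"
proof -
  have "norm (z 0) \<le> (SUP i. norm (z i))" using b by (auto intro: cSUP_upper)
  then show ?thesis using norm_ge_zero[of "z 0"] by linarith
qed

lemma sup_coord:
  fixes z :: "nat \<Rightarrow> 'a::real_normed_vector"
  assumes b: "bdd_above (range (\<lambda>i. norm (z i)))"
  shows "norm (z i) \<le> (SUP i. norm (z i))"
  using b by (auto intro: cSUP_upper)

lemma sup_le:
  fixes f :: "nat \<Rightarrow> 'a::real_normed_vector"
  assumes "\<And>i. norm (f i) \<le> M"
  shows "bdd_above (range (\<lambda>i. norm (f i))) \<and> (SUP i. norm (f i)) \<le> M"
  using assms by (auto intro!: cSUP_least bdd_aboveI2)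

lemma lp_dom:
  fixes z :: "nat \<Rightarrow> 'a::real_normed_vector" and f :: "nat \<Rightarrow> 'b::real_normed_vector"
  assumes p: "1 \<le> p" and s: "summable (\<lambda>i. norm (z i) powr p)" and c: "0 \<le> c"
    and le: "\<And>i. norm (f i) \<le> c * norm (z i)"
  shows "summable (\<lambda>i. norm (f i) powr p) \<and>
    (\<Sum>i. norm (f i) powr p) powr (1/p) \<le> c * (\<Sum>i. norm (z i) powr p) powr (1/p)"
proof -
  have t: "norm (f i) powr p \<le> c powr p * norm (z i) powr p" for i
  proof -
    have "norm (f i) powr p \<le> (c * norm (z i)) powr p"
      using p le[of i] by (intro powr_mono2) auto
    also have "\<dots> = c powr p * norm (z i) powr p" using c by (simp add: powr_mult)
    finally show ?thesis .
  qed
  have s2: "summable (\<lambda>i. c powr p * norm (z i) powr p)" using s by (rule summable_mult)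
  have sf: "summable (\<lambda>i. norm (f i) powr p)"
    by (rule summable_comparison_test[OF _ s2]) (use t in auto)
  have "(\<Sum>i. norm (f i) powr p) \<le> (\<Sum>i. c powr p * norm (z i) powr p)"
    by (rule suminf_le[OF t sf s2])
  also have "\<dots> = c powr p * (\<Sum>i. norm (z i) powr p)" using s by (rule suminf_mult)
  finally have le2: "(\<Sum>i. norm (f i) powr p) \<le> c powr p * (\<Sum>i. norm (z i) powr p)" .
  have nn: "0 \<le> (\<Sum>i. norm (f i) powr p)" using sf by (intro suminf_nonneg) auto
  have nz: "0 \<le> (\<Sum>i. norm (z i) powr p)" using s by (intro suminf_nonneg) auto
  have "(\<Sum>i. norm (f i) powr p) powr (1/p) \<le> (c powr p * (\<Sum>i. norm (z i) powr p)) powr (1/p)"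
    using p nn le2 by (intro powr_mono2) auto
  also have "\<dots> = (c powr p) powr (1/p) * (\<Sum>i. norm (z i) powr p) powr (1/p)"
    using nz by (simp add: powr_mult)
  also have "(c powr p) powr (1/p) = c" using p c by (simp add: powr_powr)
  finally show ?thesis using sf by simp
qed

lemma lp_nonneg: "0 \<le> (\<Sum>i. norm (z i) powr p) powr (1/p)" by simp

lemma lp_coord:
  fixes z :: "nat \<Rightarrow> 'a::real_normed_vector"
  assumes p: "1 \<le> p" and s: "summable (\<lambda>i. norm (z i) powr p)"
  shows "norm (z i) \<le> (\<Sum>i. norm (z i) powr p) powr (1/p)"
proof -
  have "sum (\<lambda>i. norm (z i) powr p) {i} \<le> (\<Sum>i. norm (z i) powr p)"
    by (rule sum_le_suminf[OF s]) auto
  then have "norm (z i) powr p \<le> (\<Sum>i. norm (z i) powr p)" by simp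
  then have "(norm (z i) powr p) powr (1/p) \<le> (\<Sum>i. norm (z i) powr p) powr (1/p)"
    using p by (intro powr_mono2) auto
  also have "(norm (z i) powr p) powr (1/p) = norm (z i)" using p by (simp add: powr_powr)
  finally show ?thesis .
qed

lemma lp_shl:
  fixes z :: "nat \<Rightarrow> 'a::real_normed_vector"
  assumes p: "1 \<le> p" and s: "summable (\<lambda>i. norm (z i) powr p)"
  shows "summable (\<lambda>i. norm (z (Suc i)) powr p) \<and>
    (\<Sum>i. norm (z (Suc i)) powr p) powr (1/p) \<le> (\<Sum>i. norm (z i) powr p) powr (1/p)"
proof -
  have s1: "summable (\<lambda>i. norm (z (Suc i)) powr p)"
    using summable_Suc_iff[of "\<lambda>i. norm (z i) powr p"] s by simp
  have "(\<Sum>i. norm (z (Suc i)) powr p) = (\<Sum>i. norm (z i) powr p) - norm (z 0) powr p"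
    using s by (rule suminf_split_head)
  then have "(\<Sum>i. norm (z (Suc i)) powr p) \<le> (\<Sum>i. norm (z i) powr p)" by simp
  then show ?thesis using s1 p by (auto intro!: powr_mono2 suminf_nonneg)
qed

lemma lp_shr:
  fixes z :: "nat \<Rightarrow> 'a::real_normed_vector"
  assumes p: "1 \<le> p" and s: "summable (\<lambda>i. norm (z i) powr p)"
    and g0: "g 0 = 0" and gs: "\<And>i. g (Suc i) = z i"
  shows "summable (\<lambda>i. norm (g i) powr p) \<and>
    (\<Sum>i. norm (g i) powr p) powr (1/p) \<le> (\<Sum>i. norm (z i) powr p) powr (1/p)"
proof -
  have e: "(\<lambda>i. norm (g (Suc i)) powr p) = (\<lambda>i. norm (z i) powr p)" using gs by simp
  have s1: "summable (\<lambda>i. norm (g i) powr p)"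
    using s e summable_Suc_iff[of "\<lambda>i. norm (g i) powr p"] by simp
  have "(\<Sum>i. norm (g (Suc i)) powr p) = (\<Sum>i. norm (g i) powr p) - norm (g 0) powr p"
    using s1 by (rule suminf_split_head)
  then have "(\<Sum>i. norm (g i) powr p) = (\<Sum>i. norm (z i) powr p)" using e g0 by simp
  then show ?thesis using s1 by simp
qed

lemma lp_emb:
  fixes y :: "'a::real_normed_vector"
  assumes p: "1 \<le> p"
  shows "summable (\<lambda>i. norm (if i = 0 then y else 0) powr p) \<and>
    (\<Sum>i. norm (if i = 0 then y else 0) powr p) powr (1/p) \<le> norm y"
proof -
  have e: "(\<lambda>i. norm (if i = 0 then y else 0) powr p) = (\<lambda>i. if i = 0 then norm y powr p else 0)"
    by auto
  have "(\<lambda>i. if i = 0 then norm y powr p else 0) sums (norm y powr p)"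
    using sums_single[of 0 "\<lambda>_. norm y powr p"] by simp
  then have a: "summable (\<lambda>i. if i = 0 then norm y powr p else 0)"
    and b: "(\<Sum>i. if i = 0 then norm y powr p else 0) = norm y powr p"
    by (auto simp: sums_iff)
  show ?thesis unfolding e using a b p by (simp add: powr_powr)
qed

lemma lp_add:
  fixes f g :: "nat \<Rightarrow> 'a::real_normed_vector"
  assumes p: "1 \<le> p" and sf: "summable (\<lambda>i. norm (f i) powr p)" and sg: "summable (\<lambda>i. norm (g i) powr p)"
  shows "summable (\<lambda>i. norm (f i + g i) powr p) \<and>
    (\<Sum>i. norm (f i + g i) powr p) powr (1/p) \<le>
      4 * ((\<Sum>i. norm (f i) powr p) powr (1/p) + (\<Sum>i. norm (g i) powr p) powr (1/p))"
proof -
  have key: "(a + b) powr p \<le> 2 powr p * (a powr p + b powr p)" if "0 \<le> a" "0 \<le> b" for a b :: real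
  proof -
    have "a + b \<le> 2 * max a b" by simp
    then have "(a + b) powr p \<le> (2 * max a b) powr p" using that p by (intro powr_mono2) auto
    also have "\<dots> = 2 powr p * max a b powr p" using that by (simp add: powr_mult)
    also have "max a b powr p \<le> a powr p + b powr p" by (cases "a \<le> b") (auto simp: max_def)
    finally show ?thesis by simp
  qed
  have t: "norm (f i + g i) powr p \<le> 2 powr p * (norm (f i) powr p + norm (g i) powr p)" for i
  proof -
    have "norm (f i + g i) powr p \<le> (norm (f i) + norm (g i)) powr p"
      using p norm_triangle_ineq[of "f i" "g i"] by (intro powr_mono2) auto
    also have "\<dots> \<le> 2 powr p * (norm (f i) powr p + norm (g i) powr p)" by (rule key) auto
    finally show ?thesis .
  qed
  have s2: "summable (\<lambda>i. 2 powr p * (norm (f i) powr p + norm (g i) powr p))"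
    using summable_add[OF sf sg] by (rule summable_mult)
  have s3: "summable (\<lambda>i. norm (f i + g i) powr p)"
    by (rule summable_comparison_test[OF _ s2]) (use t in auto)
  define F where "F = (\<Sum>i. norm (f i) powr p)"
  define G where "G = (\<Sum>i. norm (g i) powr p)"
  have F0: "0 \<le> F" unfolding F_def using sf by (intro suminf_nonneg) auto
  have G0: "0 \<le> G" unfolding G_def using sg by (intro suminf_nonneg) auto
  have "(\<Sum>i. norm (f i + g i) powr p) \<le> (\<Sum>i. 2 powr p * (norm (f i) powr p + norm (g i) powr p))"
    by (rule suminf_le[OF t s3 s2])
  also have "\<dots> = 2 powr p * (F + G)"
    using summable_add[OF sf sg] suminf_add[OF sf sg] unfolding F_def G_def
    by (simp add: suminf_mult)
  finally have le1: "(\<Sum>i. norm (f i + g i) powr p) \<le> 2 powr p * (F + G)" .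
  have nn: "0 \<le> (\<Sum>i. norm (f i + g i) powr p)" using s3 by (intro suminf_nonneg) auto
  have "(\<Sum>i. norm (f i + g i) powr p) powr (1/p) \<le> (2 powr p * (F + G)) powr (1/p)"
    using p nn le1 by (intro powr_mono2) auto
  also have "\<dots> = 2 * (F + G) powr (1/p)"
    using F0 G0 p by (simp add: powr_mult powr_powr)
  also have "(F + G) powr (1/p) \<le> 2 * (F powr (1/p) + G powr (1/p))"
  proof -
    have "(F + G) powr (1/p) \<le> (2 * max F G) powr (1/p)" using F0 G0 p by (intro powr_mono2) auto
    also have "\<dots> = 2 powr (1/p) * max F G powr (1/p)" using F0 G0 by (simp add: powr_mult)
    also have "2 powr (1/p) \<le> 2"
    proof -
      have "2 powr (1/p) \<le> 2 powr 1" using p by (intro powr_mono) auto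
      then show ?thesis by simp
    qed
    then have "2 powr (1/p) * max F G powr (1/p) \<le> 2 * max F G powr (1/p)"
      by (intro mult_right_mono) auto
    also have "max F G powr (1/p) \<le> F powr (1/p) + G powr (1/p)"
      by (cases "F \<le> G") (auto simp: max_def)
    finally show ?thesis by simp
  qed
  finally show ?thesis using s3 unfolding F_def G_def by simp
qed

lemma c0_bdd:
  fixes z :: "nat \<Rightarrow> 'a::real_normed_vector"
  assumes "(\<lambda>i. norm (z i)) \<longlonglongrightarrow> 0"
  shows "bdd_above (range (\<lambda>i. norm (z i)))"
proof -
  have "Bseq (\<lambda>i. norm (z i))" using assms by (auto intro: convergent_imp_Bseq convergentI)
  then show ?thesis by (simp add: Bseq_eq_bounded bounded_imp_bdd_above)
qed

lemma ps_dom: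
  fixes z :: "nat \<Rightarrow> 'a::real_normed_vector" and f :: "nat \<Rightarrow> 'a"
  assumes q: "valid_index q" and z: "z \<in> psum_space q" and c: "0 \<le> c"
    and le: "\<And>i. norm (f i) \<le> c * norm (z i)"
  shows "f \<in> psum_space q \<and> psum_norm q f \<le> c * psum_norm q z"
proof (cases q)
  case (LP p)
  then show ?thesis using q z lp_dom[OF _ _ c le, of p]
    by (simp add: valid_index_def psum_space_def psum_norm_def)
next
  case LInf
  then show ?thesis using z sup_dom[OF _ c le]
    by (simp add: psum_space_def psum_norm_def)
next
  case C0
  have t: "(\<lambda>i. norm (z i)) \<longlonglongrightarrow> 0" using z C0 by (simp add: psum_space_def)
  have "(\<lambda>i. c * norm (z i)) \<longlonglongrightarrow> 0" using tendsto_mult_right_zero[OF t] by simp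
  then have "(\<lambda>i. norm (f i)) \<longlonglongrightarrow> 0"
    by (rule Lim_null_comparison[rotated]) (use le in auto)
  then show ?thesis using C0 sup_dom[OF c0_bdd[OF t] c le]
    by (simp add: psum_space_def psum_norm_def)
qed

lemma ps_add:
  fixes f g :: "nat \<Rightarrow> 'a::real_normed_vector"
  assumes q: "valid_index q" and f: "f \<in> psum_space q" and g: "g \<in> psum_space q"
  shows "(\<lambda>i. f i + g i) \<in> psum_space q \<and>
    psum_norm q (\<lambda>i. f i + g i) \<le> 4 * (psum_norm q f + psum_norm q g)"
proof (cases q)
  case (LP p)
  then show ?thesis using q f g lp_add[of p f g]
    by (simp add: valid_index_def psum_space_def psum_norm_def)
next
  case LInf
  then have bf: "bdd_above (range (\<lambda>i. norm (f i)))" and bg: "bdd_above (range (\<lambda>i. norm (g i)))"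
    using f g by (auto simp: psum_space_def)
  then show ?thesis using LInf sup_add[OF bf bg] sup_nonneg[OF bf] sup_nonneg[OF bg]
    by (simp add: psum_space_def psum_norm_def)
next
  case C0
  have tf: "(\<lambda>i. norm (f i)) \<longlonglongrightarrow> 0" using f C0 by (simp add: psum_space_def)
  have tg: "(\<lambda>i. norm (g i)) \<longlonglongrightarrow> 0" using g C0 by (simp add: psum_space_def)
  have "(\<lambda>i. norm (f i) + norm (g i)) \<longlonglongrightarrow> 0" using tendsto_add_zero[OF tf tg] .
  then have "(\<lambda>i. norm (f i + g i)) \<longlonglongrightarrow> 0"
    by (rule Lim_null_comparison[rotated]) (simp add: norm_triangle_ineq)
  then show ?thesis using C0 sup_add[OF c0_bdd[OF tf] c0_bdd[OF tg]]
      sup_nonneg[OF c0_bdd[OF tf]] sup_nonneg[OF c0_bdd[OF tg]]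
    by (simp add: psum_space_def psum_norm_def)
qed

lemma ps_nonneg:
  fixes z :: "nat \<Rightarrow> 'a::real_normed_vector"
  assumes q: "valid_index q" and z: "z \<in> psum_space q"
  shows "0 \<le> psum_norm q z"
proof (cases q)
  case (LP p) then show ?thesis by (simp add: psum_norm_def)
next
  case LInf then show ?thesis using z sup_nonneg by (simp add: psum_space_def psum_norm_def)
next
  case C0 then show ?thesis using z sup_nonneg[OF c0_bdd] by (simp add: psum_space_def psum_norm_def)
qed

lemma ps_coord:
  fixes z :: "nat \<Rightarrow> 'a::real_normed_vector"
  assumes q: "valid_index q" and z: "z \<in> psum_space q"
  shows "norm (z i) \<le> psum_norm q z"
proof (cases q)
  case (LP p) then show ?thesis using q z lp_coord[of p z i]
    by (simp add: valid_index_def psum_space_def psum_norm_def)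
next
  case LInf then show ?thesis using z sup_coord by (simp add: psum_space_def psum_norm_def)
next
  case C0 then show ?thesis using z sup_coord[OF c0_bdd] by (simp add: psum_space_def psum_norm_def)
qed

lemma ps_shl:
  fixes z :: "nat \<Rightarrow> 'a::real_normed_vector"
  assumes q: "valid_index q" and z: "z \<in> psum_space q"
  shows "(\<lambda>i. z (Suc i)) \<in> psum_space q \<and> psum_norm q (\<lambda>i. z (Suc i)) \<le> psum_norm q z"
proof (cases q)
  case (LP p) then show ?thesis using q z lp_shl[of p z]
    by (simp add: valid_index_def psum_space_def psum_norm_def)
next
  case LInf
  then have b: "bdd_above (range (\<lambda>i. norm (z i)))" using z by (simp add: psum_space_def)
  show ?thesis using LInf sup_le[of "\<lambda>i. z (Suc i)", OF sup_coord[OF b]]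
    by (simp add: psum_space_def psum_norm_def)
next
  case C0
  then have t: "(\<lambda>i. norm (z i)) \<longlonglongrightarrow> 0" using z by (simp add: psum_space_def)
  show ?thesis using C0 sup_le[of "\<lambda>i. z (Suc i)", OF sup_coord[OF c0_bdd[OF t]]] LIMSEQ_Suc[OF t]
    by (simp add: psum_space_def psum_norm_def)
qed

lemma ps_shr:
  fixes z g :: "nat \<Rightarrow> 'a::real_normed_vector"
  assumes q: "valid_index q" and z: "z \<in> psum_space q"
    and g0: "g 0 = 0" and gs: "\<And>i. g (Suc i) = z i"
  shows "g \<in> psum_space q \<and> psum_norm q g \<le> psum_norm q z"
proof -
  have gle: "norm (g i) \<le> M" if "\<And>i. norm (z i) \<le> M" for M i
  proof (cases i)
    case 0 then show ?thesis using g0 that[of 0] norm_ge_zero[of "z 0"] by (simp del: norm_ge_zero)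
  next
    case (Suc j) then show ?thesis using gs that by simp
  qed
  show ?thesis
  proof (cases q)
    case (LP p) then show ?thesis using q z lp_shr[of p z g, OF _ _ g0 gs]
      by (simp add: valid_index_def psum_space_def psum_norm_def)
  next
    case LInf
    then have b: "bdd_above (range (\<lambda>i. norm (z i)))" using z by (simp add: psum_space_def)
    show ?thesis using LInf sup_le[of g, OF gle[OF sup_coord[OF b]]]
      by (simp add: psum_space_def psum_norm_def)
  next
    case C0
    then have t: "(\<lambda>i. norm (z i)) \<longlonglongrightarrow> 0" using z by (simp add: psum_space_def)
    have "(\<lambda>i. norm (g (Suc i))) \<longlonglongrightarrow> 0" using t gs by simp
    then have "(\<lambda>i. norm (g i)) \<longlonglongrightarrow> 0" by (rule LIMSEQ_imp_Suc)
    then show ?thesis using C0 sup_le[of g, OF gle[OF sup_coord[OF c0_bdd[OF t]]]]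
      by (simp add: psum_space_def psum_norm_def)
  qed
qed

lemma ps_emb:
  fixes y :: "'a::real_normed_vector"
  assumes q: "valid_index q"
  shows "(\<lambda>i. if i = 0 then y else 0) \<in> psum_space q \<and> psum_norm q (\<lambda>i. if i = 0 then y else 0) \<le> norm y"
proof -
  have le: "norm (if i = 0 then y else 0) \<le> norm y" for i by simp
  show ?thesis
  proof (cases q)
    case (LP p) then show ?thesis using q lp_emb[of p y]
      by (simp add: valid_index_def psum_space_def psum_norm_def)
  next
    case LInf then show ?thesis using sup_le[of "\<lambda>i. if i = 0 then y else 0", OF le]
      by (simp add: psum_space_def psum_norm_def)
  next
    case C0
    have "\<forall>\<^sub>F i in sequentially. norm (if i = 0 then y else 0) = 0"
      by (rule eventually_sequentiallyI[of 1]) auto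
    then have "(\<lambda>i. norm (if i = 0 then y else 0)) \<longlonglongrightarrow> 0" by (rule tendsto_eventually)
    then show ?thesis using C0 sup_le[of "\<lambda>i. if i = 0 then y else 0", OF le]
      by (simp add: psum_space_def psum_norm_def)
  qed
qed

definition shl :: "(nat \<Rightarrow> 'a) \<Rightarrow> nat \<Rightarrow> 'a" where "shl z = (\<lambda>i. z (Suc i))"
definition shr :: "(nat \<Rightarrow> 'a::zero) \<Rightarrow> nat \<Rightarrow> 'a" where "shr z = (\<lambda>i. if i = 0 then 0 else z (i - 1))"
definition diagop :: "('a \<Rightarrow> 'a) \<Rightarrow> (nat \<Rightarrow> 'a) \<Rightarrow> nat \<Rightarrow> 'a" where "diagop d z = (\<lambda>i. d (z i))"
definition subop :: "((nat \<Rightarrow> 'a::ab_group_add) \<Rightarrow> nat \<Rightarrow> 'a) \<Rightarrow> ((nat \<Rightarrow> 'a) \<Rightarrow> nat \<Rightarrow> 'a) \<Rightarrow> (nat \<Rightarrow> 'a) \<Rightarrow> nat \<Rightarrow> 'a"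
  where "subop A B = (\<lambda>z i. A z i - B z i)"

lemma bo_bound:
  fixes A :: "(nat \<Rightarrow> 'a::real_normed_vector) \<Rightarrow> nat \<Rightarrow> 'a"
  assumes q: "valid_index q" and A: "bounded_op q A"
  obtains K where "0 \<le> K" "\<And>x. x \<in> psum_space q \<Longrightarrow> psum_norm q (A x) \<le> K * psum_norm q x"
proof -
  obtain K where K: "\<And>x. x \<in> psum_space q \<Longrightarrow> psum_norm q (A x) \<le> K * psum_norm q x"
    using A unfolding bounded_op_def by blast
  have "psum_norm q (A x) \<le> max K 0 * psum_norm q x" if "x \<in> psum_space q" for x
  proof -
    have "K * psum_norm q x \<le> max K 0 * psum_norm q x"
      using ps_nonneg[OF q that] by (intro mult_right_mono) auto
    then show ?thesis using K[OF that] by linarith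
  qed
  then show ?thesis using that[of "max K 0"] by auto
qed

lemma bo_comp:
  fixes A B :: "(nat \<Rightarrow> 'a::real_normed_vector) \<Rightarrow> nat \<Rightarrow> 'a"
  assumes q: "valid_index q" and A: "bounded_op q A" and B: "bounded_op q B"
  shows "bounded_op q (\<lambda>z. A (B z))"
proof -
  obtain KA where KA: "0 \<le> KA" "\<And>x. x \<in> psum_space q \<Longrightarrow> psum_norm q (A x) \<le> KA * psum_norm q x"
    using bo_bound[OF q A] by blast
  obtain KB where KB: "0 \<le> KB" "\<And>x. x \<in> psum_space q \<Longrightarrow> psum_norm q (B x) \<le> KB * psum_norm q x"
    using bo_bound[OF q B] by blast
  have Bs: "B x \<in> psum_space q" if "x \<in> psum_space q" for x using B that unfolding bounded_op_def by blast
  have As: "A x \<in> psum_space q" if "x \<in> psum_space q" for x using A that unfolding bounded_op_def by blast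
  have Ba: "B (\<lambda>i. x i + y i) = (\<lambda>i. B x i + B y i)" if "x \<in> psum_space q" "y \<in> psum_space q" for x y
    using B that unfolding bounded_op_def by blast
  have Aa: "A (\<lambda>i. x i + y i) = (\<lambda>i. A x i + A y i)" if "x \<in> psum_space q" "y \<in> psum_space q" for x y
    using A that unfolding bounded_op_def by blast
  have Bc: "B (\<lambda>i. c *\<^sub>R x i) = (\<lambda>i. c *\<^sub>R B x i)" if "x \<in> psum_space q" for x c
    using B that unfolding bounded_op_def by blast
  have Ac: "A (\<lambda>i. c *\<^sub>R x i) = (\<lambda>i. c *\<^sub>R A x i)" if "x \<in> psum_space q" for x c
    using A that unfolding bounded_op_def by blast
  have bnd: "psum_norm q (A (B x)) \<le> (KA * KB) * psum_norm q x" if "x \<in> psum_space q" for x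
  proof -
    have "psum_norm q (A (B x)) \<le> KA * psum_norm q (B x)" using KA(2)[OF Bs[OF that]] .
    also have "\<dots> \<le> KA * (KB * psum_norm q x)" using KB(2)[OF that] KA(1) by (rule mult_left_mono)
    finally show ?thesis by simp
  qed
  have h1: "\<forall>x\<in>psum_space q. A (B x) \<in> psum_space q" using As Bs by blast
  have h2: "\<forall>x\<in>psum_space q. \<forall>y\<in>psum_space q. A (B (\<lambda>i. x i + y i)) = (\<lambda>i. A (B x) i + A (B y) i)"
    using Aa Ba Bs by simp
  have h3: "\<forall>c. \<forall>x\<in>psum_space q. A (B (\<lambda>i. c *\<^sub>R x i)) = (\<lambda>i. c *\<^sub>R A (B x) i)"
    using Ac Bc Bs by simp
  have h4: "\<exists>K. \<forall>x\<in>psum_space q. psum_norm q (A (B x)) \<le> K * psum_norm q x"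
    using bnd by blast
  show ?thesis unfolding bounded_op_def using h1 h2 h3 h4 by blast
qed

lemma bo_sub:
  fixes A B :: "(nat \<Rightarrow> 'a::real_normed_vector) \<Rightarrow> nat \<Rightarrow> 'a"
  assumes q: "valid_index q" and A: "bounded_op q A" and B: "bounded_op q B"
  shows "bounded_op q (subop A B)"
proof -
  obtain KA where KA: "0 \<le> KA" "\<And>x. x \<in> psum_space q \<Longrightarrow> psum_norm q (A x) \<le> KA * psum_norm q x"
    using bo_bound[OF q A] by blast
  obtain KB where KB: "0 \<le> KB" "\<And>x. x \<in> psum_space q \<Longrightarrow> psum_norm q (B x) \<le> KB * psum_norm q x"
    using bo_bound[OF q B] by blast
  have Bs: "B x \<in> psum_space q" if "x \<in> psum_space q" for x using B that unfolding bounded_op_def by blast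
  have As: "A x \<in> psum_space q" if "x \<in> psum_space q" for x using A that unfolding bounded_op_def by blast
  have Ba: "B (\<lambda>i. x i + y i) = (\<lambda>i. B x i + B y i)" if "x \<in> psum_space q" "y \<in> psum_space q" for x y
    using B that unfolding bounded_op_def by blast
  have Aa: "A (\<lambda>i. x i + y i) = (\<lambda>i. A x i + A y i)" if "x \<in> psum_space q" "y \<in> psum_space q" for x y
    using A that unfolding bounded_op_def by blast
  have Bc: "B (\<lambda>i. c *\<^sub>R x i) = (\<lambda>i. c *\<^sub>R B x i)" if "x \<in> psum_space q" for x c
    using B that unfolding bounded_op_def by blast
  have Ac: "A (\<lambda>i. c *\<^sub>R x i) = (\<lambda>i. c *\<^sub>R A x i)" if "x \<in> psum_space q" for x c
    using A that unfolding bounded_op_def by blast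
  have main: "subop A B x \<in> psum_space q \<and> psum_norm q (subop A B x) \<le> (4 * (KA + KB)) * psum_norm q x"
    if x: "x \<in> psum_space q" for x
  proof -
    have n: "(\<lambda>i. - B x i) \<in> psum_space q \<and> psum_norm q (\<lambda>i. - B x i) \<le> 1 * psum_norm q (B x)"
      by (rule ps_dom[OF q Bs[OF x]]) auto
    have e: "subop A B x = (\<lambda>i. A x i + - B x i)" unfolding subop_def by simp
    have s: "subop A B x \<in> psum_space q \<and>
        psum_norm q (subop A B x) \<le> 4 * (psum_norm q (A x) + psum_norm q (\<lambda>i. - B x i))"
      unfolding e using ps_add[OF q As[OF x]] n by blast
    have "4 * (psum_norm q (A x) + psum_norm q (\<lambda>i. - B x i)) \<le> 4 * (KA * psum_norm q x + KB * psum_norm q x)"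
      using KA(2)[OF x] KB(2)[OF x] n by simp
    then show ?thesis using s by (simp add: algebra_simps)
  qed
  have add: "subop A B (\<lambda>i. x i + y i) = (\<lambda>i. subop A B x i + subop A B y i)"
    if "x \<in> psum_space q" "y \<in> psum_space q" for x y
    using Aa[OF that] Ba[OF that] unfolding subop_def by (auto simp: fun_eq_iff algebra_simps)
  have sc: "subop A B (\<lambda>i. c *\<^sub>R x i) = (\<lambda>i. c *\<^sub>R subop A B x i)" if "x \<in> psum_space q" for x c
    using Ac[OF that] Bc[OF that] unfolding subop_def by (auto simp: fun_eq_iff scaleR_diff_right)
  have h1: "\<forall>x\<in>psum_space q. subop A B x \<in> psum_space q" using main by blast
  have h2: "\<forall>x\<in>psum_space q. \<forall>y\<in>psum_space q. subop A B (\<lambda>i. x i + y i) = (\<lambda>i. subop A B x i + subop A B y i)"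
    using add by blast
  have h3: "\<forall>c. \<forall>x\<in>psum_space q. subop A B (\<lambda>i. c *\<^sub>R x i) = (\<lambda>i. c *\<^sub>R subop A B x i)"
    using sc by blast
  have h4: "\<exists>K. \<forall>x\<in>psum_space q. psum_norm q (subop A B x) \<le> K * psum_norm q x"
    using main by blast
  show ?thesis unfolding bounded_op_def using h1 h2 h3 h4 by blast
qed

lemma bo_intro:
  assumes "\<And>x. x \<in> psum_space q \<Longrightarrow> A x \<in> psum_space q \<and> psum_norm q (A x) \<le> K * psum_norm q x"
    and "\<And>x y. x \<in> psum_space q \<Longrightarrow> y \<in> psum_space q \<Longrightarrow> A (\<lambda>i. x i + y i) = (\<lambda>i. A x i + A y i)"
    and "\<And>c x. x \<in> psum_space q \<Longrightarrow> A (\<lambda>i. c *\<^sub>R x i) = (\<lambda>i. c *\<^sub>R A x i)"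
  shows "bounded_op q A"
  unfolding bounded_op_def using assms by blast

lemma bo_shl:
  assumes q: "valid_index q"
  shows "bounded_op q (shl :: (nat \<Rightarrow> 'a::real_normed_vector) \<Rightarrow> _)"
  by (rule bo_intro[where K=1]) (use ps_shl[OF q] in \<open>auto simp: shl_def\<close>)

lemma bo_shr:
  assumes q: "valid_index q"
  shows "bounded_op q (shr :: (nat \<Rightarrow> 'a::real_normed_vector) \<Rightarrow> _)"
proof -
  have m: "shr x \<in> psum_space q \<and> psum_norm q (shr x) \<le> 1 * psum_norm q x" if "x \<in> psum_space q" for x :: "nat \<Rightarrow> 'a"
    using ps_shr[OF q that, of "shr x"] by (simp add: shr_def)
  show ?thesis by (rule bo_intro[where K=1, OF m]) (auto simp: shr_def fun_eq_iff)
qed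

lemma bo_P0:
  assumes q: "valid_index q"
  shows "bounded_op q (P0 :: (nat \<Rightarrow> 'a::real_normed_vector) \<Rightarrow> _)"
proof -
  have m: "P0 x \<in> psum_space q \<and> psum_norm q (P0 x) \<le> 1 * psum_norm q x" if "x \<in> psum_space q" for x :: "nat \<Rightarrow> 'a"
    by (rule ps_dom[OF q that]) (auto simp: P0_def)
  show ?thesis by (rule bo_intro[where K=1, OF m]) (auto simp: P0_def fun_eq_iff)
qed

lemma bo_diag:
  fixes d :: "'a::real_normed_vector \<Rightarrow> 'a"
  assumes q: "valid_index q" and da: "\<And>x y. d (x + y) = d x + d y"
    and dc: "\<And>c x. d (c *\<^sub>R x) = c *\<^sub>R d x" and K: "0 \<le> K" and dK: "\<And>x. norm (d x) \<le> K * norm x"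
  shows "bounded_op q (diagop d)"
proof -
  have m: "diagop d x \<in> psum_space q \<and> psum_norm q (diagop d x) \<le> K * psum_norm q x" if "x \<in> psum_space q" for x
    by (rule ps_dom[OF q that K]) (auto simp: diagop_def dK)
  show ?thesis by (rule bo_intro[OF m]) (auto simp: diagop_def fun_eq_iff da dc)
qed

theorem mainTheorem8:
  fixes T :: "(nat \<Rightarrow> 'a::banach) \<Rightarrow> (nat \<Rightarrow> 'a)"
  assumes "valid_index q"
    and "bounded_op q T"
  shows "is_commutator q (\<lambda>z. P0 (T z)) \<and> is_commutator q (\<lambda>z. T (P0 z))"
proof -
  note q = assms(1) and Tb = assms(2)
  let ?S = "psum_space q :: (nat \<Rightarrow> 'a) set"
  define emb :: "'a \<Rightarrow> nat \<Rightarrow> 'a" where "emb y = (\<lambda>i. if i = 0 then y else 0)" for y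
  have emb_s: "emb y \<in> ?S" and emb_n: "psum_norm q (emb y) \<le> norm y" for y
    using ps_emb[OF q, of y] unfolding emb_def by auto
  have Ts: "T x \<in> ?S" if "x \<in> ?S" for x using Tb that unfolding bounded_op_def by blast
  have Ta: "T (\<lambda>i. x i + y i) = (\<lambda>i. T x i + T y i)" if "x \<in> ?S" "y \<in> ?S" for x y
    using Tb that unfolding bounded_op_def by blast
  have Tc: "T (\<lambda>i. c *\<^sub>R x i) = (\<lambda>i. c *\<^sub>R T x i)" if "x \<in> ?S" for x c
    using Tb that unfolding bounded_op_def by blast
  obtain K where K0: "0 \<le> K" and K: "\<And>x. x \<in> ?S \<Longrightarrow> psum_norm q (T x) \<le> K * psum_norm q x"
    using bo_bound[OF q Tb] by blast
  define d where "d y = T (emb y) 0" for y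
  have da: "d (x + y) = d x + d y" for x y
  proof -
    have "emb (x + y) = (\<lambda>i. emb x i + emb y i)" unfolding emb_def by auto
    then show ?thesis unfolding d_def using Ta[OF emb_s emb_s] by simp
  qed
  have dc: "d (c *\<^sub>R x) = c *\<^sub>R d x" for c x
  proof -
    have "emb (c *\<^sub>R x) = (\<lambda>i. c *\<^sub>R emb x i)" unfolding emb_def by auto
    then show ?thesis unfolding d_def using Tc[OF emb_s] by simp
  qed
  have dK: "norm (d x) \<le> K * norm x" for x
  proof -
    have "norm (d x) \<le> psum_norm q (T (emb x))" unfolding d_def by (rule ps_coord[OF q Ts[OF emb_s]])
    also have "\<dots> \<le> K * psum_norm q (emb x)" by (rule K[OF emb_s])
    also have "\<dots> \<le> K * norm x" using emb_n K0 by (rule mult_left_mono)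
    finally show ?thesis .
  qed
  have Dg: "bounded_op q (diagop d)" by (rule bo_diag[OF q da dc K0 dK])
  have zero_s: "(\<lambda>i. 0) \<in> ?S" using emb_s[of 0] unfolding emb_def by simp
  have T0: "T (\<lambda>i. 0) = (\<lambda>i. 0)" using Tc[OF zero_s, of 0] by simp
  have split: "x = (\<lambda>i. emb (x 0) i + shr (shl x) i)" for x :: "nat \<Rightarrow> 'a"
    by (auto simp: fun_eq_iff emb_def shr_def shl_def)
  have shs: "shr (shl x) \<in> ?S" if "x \<in> ?S" for x
    using bo_shr[OF q] bo_shl[OF q] that unfolding bounded_op_def by blast
  define B1 where "B1 = subop (\<lambda>z. shr (diagop d z)) (\<lambda>z. P0 (T (shr z)))"
  have B1b: "bounded_op q B1" unfolding B1_def
    by (rule bo_sub[OF q bo_comp[OF q bo_shr[OF q] Dg] bo_comp[OF q bo_P0[OF q] bo_comp[OF q Tb bo_shr[OF q]]]])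
  have c1: "P0 (T z) = (\<lambda>i. shl (B1 z) i - B1 (shl z) i)" if z: "z \<in> ?S" for z
  proof -
    have e: "(\<lambda>i. emb (z 0) i + shr (shl z) i) = z" using split[of z] by simp
    have "T z = (\<lambda>i. T (emb (z 0)) i + T (shr (shl z)) i)"
      using Ta[OF emb_s[of "z 0"] shs[OF z]] unfolding e .
    then have tz: "T z 0 = d (z 0) + T (shr (shl z)) 0" using fun_cong[of _ _ 0] unfolding d_def by blast
    show ?thesis
    proof (rule ext)
      fix i show "P0 (T z) i = shl (B1 z) i - B1 (shl z) i"
        using tz by (cases i) (auto simp: P0_def B1_def subop_def shl_def shr_def diagop_def)
    qed
  qed
  have com1: "is_commutator q (\<lambda>z. P0 (T z))"
    unfolding is_commutator_def using bo_shl[OF q] B1b c1 by blast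
  define A2 where "A2 = subop (\<lambda>z. shl (diagop d z)) (\<lambda>z. shl (T (P0 z)))"
  have A2b: "bounded_op q A2" unfolding A2_def
    by (rule bo_sub[OF q bo_comp[OF q bo_shl[OF q] Dg] bo_comp[OF q bo_shl[OF q] bo_comp[OF q Tb bo_P0[OF q]]]])
  have c2: "T (P0 z) = (\<lambda>i. A2 (shr z) i - shr (A2 z) i)" if z: "z \<in> ?S" for z
  proof -
    have p0s: "P0 (shr z) = (\<lambda>i. 0)" by (auto simp: P0_def shr_def fun_eq_iff)
    have p0e: "P0 z = emb (z 0)" by (auto simp: P0_def emb_def fun_eq_iff)
    have t0: "T (P0 (shr z)) = (\<lambda>i. 0)" using p0s T0 by simp
    have t0': "T (P0 (\<lambda>i. if i = 0 then 0 else z (i - 1))) = (\<lambda>i. 0)"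
      using t0 unfolding shr_def .
    show ?thesis
    proof (rule ext)
      fix i show "T (P0 z) i = A2 (shr z) i - shr (A2 z) i"
        using T0 by (cases i) (auto simp: t0' p0e A2_def subop_def shl_def shr_def diagop_def d_def)
    qed
  qed
  have com2: "is_commutator q (\<lambda>z. T (P0 z))"
    unfolding is_commutator_def using bo_shr[OF q] A2b c2 by blast
  show ?thesis using com1 com2 by blast
qed

end
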